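(* Let $Y$ be a random simplicial complex on $[n]=\{0,\dots,n\}$ drawn from the lower model in the medial regime, with constants $0<p\le P<1$ such that $p\le p_\sigma\le P$ for all $\sigma$. Let $\mathcal U$ be the cover of $Y$ by the closed stars of its vertices. Then for any constant $0<\alpha<1$, asymptotically almost surely the nerve complex $\mathcal N(\mathcal U)$ contains the full $\lfloor\alpha\log_{(p^{-1})}n\rfloor$-dimensional skeleton of the simplex spanned by the vertex set of $Y$; in particular $\mathcal N(\mathcal U)$ is $\big(\lfloor\alpha\log_{(p^{-1})}n\rfloor-1\big)$-connected, asymptotically almost surely.
   Context: Lower model: each non-empty proper subset $\sigma\subsetneq[n]$ is included independently with probability $p_\sigma$ into a random hypergraph $X$, and $Y$ is the largest simplicial complex contained in $X$. Medial regime: $p,P\in(0,1)$ are independent of $n$. The closed star $\mathrm{St}(v)$ of a vertex $v$ is the union of all closed simplexes of $Y$ containing $v$. The nerve $\mathcal N(\mathcal U)$ has the vertices of $Y$ as vertices, and a set $S$ of vertices spans a simplex iff $\bigcap_{v\in S}\mathrm{St}(v)\neq\emptyset$. Asymptotically almost surely means with probability tending to $1$ as $n\to\infty$. *)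

theory Defs
  imports "HOL-Probability.Product_PMF"
begin

definition cand_faces :: "nat \<Rightarrow> nat set set" where
  "cand_faces n = {\<sigma>. \<sigma> \<subseteq> {0..n} \<and> \<sigma> \<noteq> {} \<and> \<sigma> \<noteq> {0..n}}"

definition lower_hypergraph :: "nat \<Rightarrow> (nat set \<Rightarrow> real) \<Rightarrow> nat set set pmf" where
  "lower_hypergraph n ps =
     map_pmf (\<lambda>f. {\<sigma> \<in> cand_faces n. f \<sigma>})
       (Pi_pmf (cand_faces n) False (\<lambda>\<sigma>. bernoulli_pmf (ps \<sigma>)))"

definition largest_complex :: "'a set set \<Rightarrow> 'a set set" where
  "largest_complex X = {\<sigma>. \<sigma> \<noteq> {} \<and> (\<forall>\<tau>. \<tau> \<subseteq> \<sigma> \<and> \<tau> \<noteq> {} \<longrightarrow> \<tau> \<in> X)}"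

definition vertices :: "'a set set \<Rightarrow> 'a set" where
  "vertices Y = {v. {v} \<in> Y}"

text \<open>Closed star of v, described by the (open) simplices of Y it contains:
  a point in the relative interior of tau lies in St(v) iff tau is a face of a simplex
  containing v, i.e. tau \<union> {v} is a simplex of Y.\<close>
definition closed_star :: "'a set set \<Rightarrow> 'a \<Rightarrow> 'a set set" where
  "closed_star Y v = {\<tau> \<in> Y. \<tau> \<union> {v} \<in> Y}"

definition star_nerve :: "'a set set \<Rightarrow> 'a set set" where
  "star_nerve Y = {S. S \<noteq> {} \<and> finite S \<and> S \<subseteq> vertices Y \<and>
                      (\<Inter>v\<in>S. closed_star Y v) \<noteq> {}}"

end

theory Submission
  imports Defs "HOL-Real_Asymp.Real_Asymp"
begin

lemma prob_pair_Times:
  "measure_pmf.prob (pair_pmf M N) (X \<times> Y) = measure_pmf.prob M X * measure_pmf.prob N Y"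
proof -
  have "measure_pmf.prob (pair_pmf M N) (X \<times> Y) = measure_pmf.prob (pair_pmf M N) ((X \<times> Y) \<inter> set_pmf (pair_pmf M N))"
    by (rule measure_Int_set_pmf[symmetric])
  also have "(X \<times> Y) \<inter> set_pmf (pair_pmf M N) = (X \<inter> set_pmf M) \<times> (Y \<inter> set_pmf N)" by auto
  also have "measure_pmf.prob (pair_pmf M N) \<dots> = measure_pmf.prob M (X \<inter> set_pmf M) * measure_pmf.prob N (Y \<inter> set_pmf N)"
    by (intro measure_pmf_prob_product) (auto intro: countable_Int2)
  finally show ?thesis by (simp add: measure_Int_set_pmf)
qed

lemma Pi_pmf_marginal:
  assumes "finite A" "A' \<subseteq> A" "B \<subseteq> A'"
    and dep: "\<And>f g. (\<And>x. x \<in> B \<Longrightarrow> f x = g x) \<Longrightarrow> f \<in> E \<longleftrightarrow> g \<in> E"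
  shows "measure_pmf.prob (Pi_pmf A' d p) E = measure_pmf.prob (Pi_pmf A d p) E"
proof -
  have "measure_pmf.prob (Pi_pmf A' d p) E =
     measure_pmf.prob (Pi_pmf A d p) ((\<lambda>f x. if x \<in> A' then f x else d) -` E)"
    by (simp add: Pi_pmf_subset[OF assms(1,2)] measure_map_pmf)
  also have "(\<lambda>f x. if x \<in> A' then f x else d) -` E = E"
  proof (intro set_eqI)
    fix f
    have "(\<lambda>x. if x \<in> A' then f x else d) \<in> E \<longleftrightarrow> f \<in> E"
      by (rule dep) (use assms(3) in auto)
    then show "f \<in> (\<lambda>f x. if x \<in> A' then f x else d) -` E \<longleftrightarrow> f \<in> E" by simp
  qed
  finally show ?thesis .
qed

lemma indep_blocks:
  fixes E :: "'i \<Rightarrow> ('a \<Rightarrow> 'b) set" and B :: "'i \<Rightarrow> 'a set"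
  assumes "finite W" "finite A" "\<And>w. w \<in> W \<Longrightarrow> B w \<subseteq> A"
   "\<And>w w'. w \<in> W \<Longrightarrow> w' \<in> W \<Longrightarrow> w \<noteq> w' \<Longrightarrow> B w \<inter> B w' = {}"
   "\<And>w f g. w \<in> W \<Longrightarrow> (\<And>x. x \<in> B w \<Longrightarrow> f x = g x) \<Longrightarrow> f \<in> E w \<longleftrightarrow> g \<in> E w"
  shows "measure_pmf.prob (Pi_pmf A d p) {f. \<forall>w\<in>W. f \<in> E w} = (\<Prod>w\<in>W. measure_pmf.prob (Pi_pmf A d p) (E w))"
  using assms
proof (induction W arbitrary: A rule: finite_induct)
  case empty
  show ?case by simp
next
  case (insert w W A)
  define A1 where "A1 = B w"
  define A2 where "A2 = A - B w"
  have "B w \<subseteq> A" using insert.prems(2) by simp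
  hence fin1: "finite A1" and fin2: "finite A2"
    using insert.prems(1) finite_subset unfolding A1_def A2_def by auto
  have AU: "A = A1 \<union> A2" "A1 \<inter> A2 = {}" using insert.prems(2) unfolding A1_def A2_def by auto
  define h where "h = (\<lambda>(f::'a\<Rightarrow>'b,g::'a\<Rightarrow>'b) x. if x \<in> A1 then f x else g x)"
  have split: "Pi_pmf A d p = map_pmf h (pair_pmf (Pi_pmf A1 d p) (Pi_pmf A2 d p))"
    unfolding h_def AU(1) by (rule Pi_pmf_union[OF fin1 fin2 AU(2)])
  have pre: "h -` {f. \<forall>w\<in>insert w W. f \<in> E w} = E w \<times> {g. \<forall>w'\<in>W. g \<in> E w'}"
  proof (intro set_eqI, clarify)
    fix f g
    have 1: "h (f, g) \<in> E w \<longleftrightarrow> f \<in> E w"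
      by (rule insert.prems(4)) (auto simp: h_def A1_def)
    have 2: "h (f, g) \<in> E w' \<longleftrightarrow> g \<in> E w'" if "w' \<in> W" for w'
    proof (rule insert.prems(4))
      show "w' \<in> insert w W" using that by simp
      fix x assume "x \<in> B w'"
      moreover have "B w \<inter> B w' = {}" using insert.prems(3)[of w w'] that insert.hyps(2) by auto
      ultimately show "h (f, g) x = g x" by (auto simp: h_def A1_def)
    qed
    show "((f, g) \<in> h -` {f. \<forall>w\<in>insert w W. f \<in> E w}) = ((f, g) \<in> E w \<times> {g. \<forall>w'\<in>W. g \<in> E w'})"
      using 1 2 by auto
  qed
  have "measure_pmf.prob (Pi_pmf A d p) {f. \<forall>w\<in>insert w W. f \<in> E w}
      = measure_pmf.prob (Pi_pmf A1 d p) (E w) * measure_pmf.prob (Pi_pmf A2 d p) {g. \<forall>w'\<in>W. g \<in> E w'}"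
    unfolding split measure_map_pmf pre by (rule prob_pair_Times)
  also have "measure_pmf.prob (Pi_pmf A1 d p) (E w) = measure_pmf.prob (Pi_pmf A d p) (E w)"
  proof (rule Pi_pmf_marginal[OF insert.prems(1), of _ "B w"])
    show "A1 \<subseteq> A" "B w \<subseteq> A1" using \<open>B w \<subseteq> A\<close> by (auto simp: A1_def)
    show "\<And>f g. (\<And>x. x \<in> B w \<Longrightarrow> f x = g x) \<Longrightarrow> (f \<in> E w) = (g \<in> E w)"
      using insert.prems(4)[of w] by blast
  qed
  also have "measure_pmf.prob (Pi_pmf A2 d p) {g. \<forall>w'\<in>W. g \<in> E w'}
       = (\<Prod>w'\<in>W. measure_pmf.prob (Pi_pmf A2 d p) (E w'))"
  proof (rule insert.IH[OF fin2])
    show "B w' \<subseteq> A2" if "w' \<in> W" for w'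
      using that insert.prems(3)[of w w'] insert.prems(2)[of w'] insert.hyps(2) unfolding A2_def by auto
  next
    fix w1 w2 assume "w1 \<in> W" "w2 \<in> W" "w1 \<noteq> w2"
    then show "B w1 \<inter> B w2 = {}" using insert.prems(3) by blast
  next
    fix w1 and f g :: "'a \<Rightarrow> 'b" assume "w1 \<in> W" "\<And>x. x \<in> B w1 \<Longrightarrow> f x = g x"
    then show "f \<in> E w1 \<longleftrightarrow> g \<in> E w1" using insert.prems(4)[of w1 f g] by blast
  qed
  also have "\<dots> = (\<Prod>w'\<in>W. measure_pmf.prob (Pi_pmf A d p) (E w'))"
  proof (rule prod.cong[OF refl], rule Pi_pmf_marginal[OF insert.prems(1), of _ "B _"])
    fix w' assume w': "w' \<in> W"
    show "A2 \<subseteq> A" unfolding A2_def by auto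
    show "B w' \<subseteq> A2"
      using w' insert.prems(3)[of w w'] insert.prems(2)[of w'] insert.hyps(2) unfolding A2_def by auto
    show "\<And>f g. (\<And>x. x \<in> B w' \<Longrightarrow> f x = g x) \<Longrightarrow> (f \<in> E w') = (g \<in> E w')"
      using insert.prems(4)[of w'] w' by blast
  qed
  finally show ?case using insert.hyps by simp
qed


lemma prob_all_true:
  assumes "finite A" "Bl \<subseteq> A" "\<And>x. x \<in> A \<Longrightarrow> 0 \<le> q x \<and> q x \<le> 1"
  shows "measure_pmf.prob (Pi_pmf A False (\<lambda>x. bernoulli_pmf (q x))) {f. \<forall>x\<in>Bl. f x} = (\<Prod>x\<in>Bl. q x)"
proof -
  have "{f. \<forall>x\<in>Bl. f x} = Pi A (\<lambda>x. if x \<in> Bl then {True} else UNIV)"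
    using assms(2) by (auto simp: Pi_def)
  hence "measure_pmf.prob (Pi_pmf A False (\<lambda>x. bernoulli_pmf (q x))) {f. \<forall>x\<in>Bl. f x}
      = (\<Prod>x\<in>A. measure_pmf.prob (bernoulli_pmf (q x)) (if x \<in> Bl then {True} else UNIV))"
    using measure_Pi_pmf_Pi[OF assms(1)] by simp
  also have "\<dots> = (\<Prod>x\<in>A. if x \<in> Bl then q x else 1)"
    by (intro prod.cong refl) (use assms(3) in \<open>auto simp: measure_pmf_single\<close>)
  also have "\<dots> = prod q {x\<in>A. x\<in>Bl}"
    using assms(1) by (simp add: prod.If_cases Int_def)
  also have "{x\<in>A. x\<in>Bl} = Bl" using assms(2) by auto
  finally show ?thesis .
qed

lemma card_small_subsets:
  "card {S. S \<subseteq> {0..(n::nat)} \<and> S \<noteq> {} \<and> card S \<le> k+1} \<le> (k+2) * (n+1)^(k+1)"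
proof -
  have "{S. S \<subseteq> {0..n} \<and> S \<noteq> {} \<and> card S \<le> k+1} \<subseteq> (\<Union>i\<in>{..k+1}. {S. S \<subseteq> {0..n} \<and> card S = i})"
    by auto
  hence "card {S. S \<subseteq> {0..(n::nat)} \<and> S \<noteq> {} \<and> card S \<le> k+1} \<le> card (\<Union>i\<in>{..k+1}. {S. S \<subseteq> {0..n} \<and> card S = i})"
    by (intro card_mono) auto
  also have "\<dots> \<le> (\<Sum>i\<in>{..k+1}. card {S. S \<subseteq> {0..n} \<and> card S = i})"
    by (rule card_UN_le) auto
  also have "\<dots> = (\<Sum>i\<in>{..k+1}. (n+1) choose i)"
    by (simp add: n_subsets)
  also have "\<dots> \<le> (\<Sum>i\<in>{..k+1}. (n+1)^(k+1))"
  proof (intro sum_mono)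
    fix i assume "i \<in> {..k+1}"
    have "(n+1) choose i \<le> (n+1)^i" by (cases "i \<le> n+1") (auto simp: binomial_le_pow binomial_eq_0)
    also have "\<dots> \<le> (n+1)^(k+1)" using \<open>i \<in> {..k+1}\<close> by (intro power_increasing) auto
    finally show "(n+1) choose i \<le> (n+1)^(k+1)" .
  qed
  also have "\<dots> = (k+2) * (n+1)^(k+1)" by simp
  finally show ?thesis .
qed

lemma prob_bound:
  fixes q :: "nat set \<Rightarrow> real" and p :: real
  assumes n2: "2 \<le> n" and p: "0 < p" "p \<le> 1"
    and q: "\<And>\<sigma>. \<sigma> \<in> cand_faces n \<Longrightarrow> p \<le> q \<sigma> \<and> q \<sigma> \<le> 1"
  shows "1 - real (k+2) * real (n+1)^(k+1) * (1 - p^(k+2))^(n-k) \<le>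
    measure_pmf.prob (lower_hypergraph n q)
      {X. \<forall>S. S \<noteq> {} \<and> S \<subseteq> vertices (largest_complex X) \<and> card S \<le> k + 1
              \<longrightarrow> S \<in> star_nerve (largest_complex X)}"
proof -
  define C where "C = cand_faces n"
  define \<Omega> where "\<Omega> = Pi_pmf C False (\<lambda>\<sigma>. bernoulli_pmf (q \<sigma>))"
  define G :: "nat set set set" where "G = {X. \<forall>S. S \<noteq> {} \<and> S \<subseteq> vertices (largest_complex X) \<and> card S \<le> k + 1
              \<longrightarrow> S \<in> star_nerve (largest_complex X)}"
  define Sets where "Sets = {S. S \<subseteq> {0..n} \<and> S \<noteq> {} \<and> card S \<le> k+1}"
  define Bl where "Bl S w = insert {w} ((\<lambda>v. {v,w}) ` S)" for S :: "nat set" and w :: nat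
  define Ew where "Ew S w = {f. \<not> (\<forall>\<sigma>\<in>Bl S w. f \<sigma>)}" for S w
  define bad where "bad S = {f. \<forall>w\<in>{0..n}-S. f \<in> Ew S w}" for S
  define r where "r = 1 - p^(k+2)"
  have pk: "0 \<le> p^(k+2)" "p^(k+2) \<le> 1" using p by (simp, intro power_le_one, auto)
  have r01: "0 \<le> r" "r \<le> 1" unfolding r_def using pk by auto
  have q01: "0 \<le> q \<sigma> \<and> q \<sigma> \<le> 1" if "\<sigma> \<in> C" for \<sigma>
  proof -
    have "p \<le> q \<sigma> \<and> q \<sigma> \<le> 1" using q that unfolding C_def by blast
    then show ?thesis using p by linarith
  qed
  have finC: "finite C" unfolding C_def cand_faces_def
    by (rule finite_subset[of _ "Pow {0..n}"]) auto
  have Bl_sub: "Bl S w \<subseteq> C" if SW: "S \<subseteq> {0..n}" "w \<in> {0..n}" for S w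
  proof
    fix \<sigma> assume "\<sigma> \<in> Bl S w"
    then have "\<sigma> = {w} \<or> (\<exists>v\<in>S. \<sigma> = {v,w})" unfolding Bl_def by auto
    then obtain v where v: "v \<in> {0..n}" and \<sigma>: "\<sigma> = {w} \<or> \<sigma> = {v,w}"
      using SW by blast
    have "card \<sigma> \<le> 2" using \<sigma> by (auto simp: card_insert_if)
    moreover have "card {0..n} = n + 1" by simp
    ultimately have "\<sigma> \<noteq> {0..n}" using n2 by auto
    then show "\<sigma> \<in> C" using \<sigma> v SW unfolding C_def cand_faces_def by auto
  qed
  have key: "{\<sigma> \<in> C. f \<sigma>} \<in> G" if H: "\<forall>S\<in>Sets. f \<notin> bad S" for f
  proof -
    define X where "X = {\<sigma> \<in> C. f \<sigma>}"
    define Y where "Y = largest_complex X"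
    have "S \<in> star_nerve Y" if S: "S \<noteq> {}" "S \<subseteq> vertices Y" "card S \<le> k + 1" for S
    proof -
      have vX: "{v} \<in> X" if "v \<in> S" for v
        using S(2) that unfolding vertices_def Y_def largest_complex_def by blast
      hence Sn: "S \<subseteq> {0..n}" unfolding X_def C_def cand_faces_def by auto
      hence "S \<in> Sets" using S unfolding Sets_def by auto
      hence "f \<notin> bad S" using H by blast
      then obtain w where w: "w \<in> {0..n}" "w \<notin> S" and fw: "\<forall>\<sigma>\<in>Bl S w. f \<sigma>"
        unfolding bad_def Ew_def by auto
      have BlX: "\<sigma> \<in> X" if "\<sigma> \<in> Bl S w" for \<sigma>
        using Bl_sub[OF Sn w(1)] fw that unfolding X_def by auto
      have wY: "{w} \<in> Y"
        unfolding Y_def largest_complex_def using BlX[of "{w}"]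
        by (auto simp: Bl_def subset_singleton_iff)
      have "{w} \<union> {v} \<in> Y" if "v \<in> S" for v
      proof -
        have "\<tau> \<in> X" if "\<tau> \<subseteq> {w} \<union> {v}" "\<tau> \<noteq> {}" for \<tau>
        proof -
          have "\<tau> = {w} \<or> \<tau> = {v} \<or> \<tau> = {v, w}" using that by auto
          then show ?thesis using BlX[of "{w}"] BlX[of "{v,w}"] vX[OF \<open>v \<in> S\<close>] \<open>v \<in> S\<close>
            by (auto simp: Bl_def)
        qed
        then show ?thesis unfolding Y_def largest_complex_def by auto
      qed
      hence "{w} \<in> (\<Inter>v\<in>S. closed_star Y v)" using wY by (auto simp: closed_star_def)
      hence ne: "(\<Inter>v\<in>S. closed_star Y v) \<noteq> {}" by (intro notI) simp
      have "finite S" using Sn finite_subset by blast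
      then show ?thesis unfolding star_nerve_def using S(1,2) ne by simp
    qed
    then show ?thesis unfolding G_def by (simp add: X_def Y_def)
  qed
  have probG: "measure_pmf.prob (lower_hypergraph n q) G = measure_pmf.prob \<Omega> ((\<lambda>f. {\<sigma> \<in> C. f \<sigma>}) -` G)"
    unfolding lower_hypergraph_def \<Omega>_def C_def by (simp add: measure_map_pmf)
  have sub: "UNIV - (\<Union>S\<in>Sets. bad S) \<subseteq> (\<lambda>f. {\<sigma> \<in> C. f \<sigma>}) -` G"
    using key by blast
  have finSets: "finite Sets" unfolding Sets_def
    by (rule finite_subset[of _ "Pow {0..n}"]) auto
  have each: "measure_pmf.prob \<Omega> (bad S) \<le> r^(n-k)" if S: "S \<in> Sets" for S
  proof -
    have Sn: "S \<subseteq> {0..n}" "card S \<le> k+1" using S unfolding Sets_def by auto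
    have "measure_pmf.prob \<Omega> (bad S) = (\<Prod>w\<in>{0..n}-S. measure_pmf.prob \<Omega> (Ew S w))"
      unfolding bad_def \<Omega>_def
    proof (rule indep_blocks[where B = "Bl S"])
      show "finite ({0..n} - S)" by simp
      show "finite C" by fact
      show "Bl S w \<subseteq> C" if "w \<in> {0..n} - S" for w using Bl_sub[OF Sn(1)] that by auto
      show "Bl S w \<inter> Bl S w' = {}" if "w \<in> {0..n} - S" "w' \<in> {0..n} - S" "w \<noteq> w'" for w w'
        using that unfolding Bl_def by (auto simp: doubleton_eq_iff)
      show "(f \<in> Ew S w) = (g \<in> Ew S w)" if "w \<in> {0..n} - S" "\<And>x. x \<in> Bl S w \<Longrightarrow> f x = g x"
        for w and f g :: "nat set \<Rightarrow> bool"
        using that(2) unfolding Ew_def by auto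
    qed
    also have "\<dots> \<le> (\<Prod>w\<in>{0..n}-S. r)"
    proof (rule prod_mono, rule conjI)
      fix w assume w: "w \<in> {0..n} - S"
      have allp: "measure_pmf.prob \<Omega> {f. \<forall>\<sigma>\<in>Bl S w. f \<sigma>} = (\<Prod>\<sigma>\<in>Bl S w. q \<sigma>)"
        unfolding \<Omega>_def
        by (rule prob_all_true[OF finC Bl_sub[OF Sn(1)]]) (use w q01 in auto)
      have "Ew S w = space (measure_pmf \<Omega>) - {f. \<forall>\<sigma>\<in>Bl S w. f \<sigma>}"
        unfolding Ew_def by auto
      hence E: "measure_pmf.prob \<Omega> (Ew S w) = 1 - (\<Prod>\<sigma>\<in>Bl S w. q \<sigma>)"
        using measure_pmf.prob_compl[of "{f. \<forall>\<sigma>\<in>Bl S w. f \<sigma>}" \<Omega>] allp by simp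
      have finBl: "finite (Bl S w)" unfolding Bl_def using finite_subset[OF Sn(1)] by auto
      have cardBl: "card (Bl S w) \<le> k + 2"
      proof -
        have "card (Bl S w) \<le> Suc (card ((\<lambda>v. {v,w}) ` S))" unfolding Bl_def
          by (rule card_insert_le_m1) (auto simp: card_image_le) 
        also have "card ((\<lambda>v. {v,w}) ` S) \<le> card S" using finite_subset[OF Sn(1)] by (intro card_image_le) auto
        finally show ?thesis using Sn(2) by simp
      qed
      have "p^(k+2) \<le> p^(card (Bl S w))" using p cardBl by (intro power_decreasing) auto
      also have "\<dots> = (\<Prod>\<sigma>\<in>Bl S w. p)" by simp
      also have "\<dots> \<le> (\<Prod>\<sigma>\<in>Bl S w. q \<sigma>)"
        using Bl_sub[OF Sn(1)] w q p by (intro prod_mono) (auto simp: C_def)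
      finally show "measure_pmf.prob \<Omega> (Ew S w) \<le> r" unfolding E r_def by simp
    qed simp
    also have "\<dots> = r ^ card ({0..n} - S)" by simp
    also have "\<dots> \<le> r^(n-k)"
    proof (rule power_decreasing)
      have "card ({0..n} - S) = n + 1 - card S" using Sn(1) by (simp add: card_Diff_subset finite_subset)
      then show "n - k \<le> card ({0..n} - S)" using Sn(2) by simp
      show "0 \<le> r" "r \<le> 1" by (fact r01)+
    qed
    finally show ?thesis .
  qed
  have "1 - measure_pmf.prob \<Omega> (\<Union>S\<in>Sets. bad S) = measure_pmf.prob \<Omega> (UNIV - (\<Union>S\<in>Sets. bad S))"
    using measure_pmf.prob_compl[of "\<Union>S\<in>Sets. bad S" \<Omega>] by simp
  also have "\<dots> \<le> measure_pmf.prob \<Omega> ((\<lambda>f. {\<sigma> \<in> C. f \<sigma>}) -` G)"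
    by (rule measure_pmf.finite_measure_mono[OF sub]) simp
  finally have 1: "1 - measure_pmf.prob \<Omega> (\<Union>S\<in>Sets. bad S) \<le> measure_pmf.prob (lower_hypergraph n q) G"
    using probG by simp
  have "measure_pmf.prob \<Omega> (\<Union>S\<in>Sets. bad S) \<le> (\<Sum>S\<in>Sets. measure_pmf.prob \<Omega> (bad S))"
    by (rule measure_pmf.finite_measure_subadditive_finite[OF finSets]) simp
  also have "\<dots> \<le> (\<Sum>S\<in>Sets. r^(n-k))" by (rule sum_mono[OF each])
  also have "\<dots> = real (card Sets) * r^(n-k)" by simp
  also have "\<dots> \<le> real ((k+2) * (n+1)^(k+1)) * r^(n-k)"
  proof (rule mult_right_mono)
    show "real (card Sets) \<le> real ((k+2) * (n+1)^(k+1))"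
      unfolding Sets_def using card_small_subsets[of n k] by linarith
    show "0 \<le> r^(n-k)" using r01 by simp
  qed
  also have "real ((k+2) * (n+1)^(k+1)) * r^(n-k) = real (k+2) * real (n+1)^(k+1) * (1 - p^(k+2))^(n-k)"
    unfolding r_def by (simp only: of_nat_mult of_nat_power)
  finally have 2: "measure_pmf.prob \<Omega> (\<Union>S\<in>Sets. bad S) \<le> real (k+2) * real (n+1)^(k+1) * (1 - p^(k+2))^(n-k)" .
  show ?thesis using 1 2 unfolding G_def by linarith
qed

lemma T_tendsto:
  fixes p \<alpha> :: real
  assumes p: "0 < p" "p < 1" and a: "0 < \<alpha>" "\<alpha> < 1"
  shows "(\<lambda>n. real (nat \<lfloor>\<alpha> * log (1/p) (real n)\<rfloor> + 2) * real (n+1)^(nat \<lfloor>\<alpha> * log (1/p) (real n)\<rfloor> + 1)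
            * (1 - p^(nat \<lfloor>\<alpha> * log (1/p) (real n)\<rfloor> + 2))^(n - nat \<lfloor>\<alpha> * log (1/p) (real n)\<rfloor>)) \<longlonglongrightarrow> 0"
    (is "?T \<longlonglongrightarrow> 0")
proof -
  define L where "L = ln (1/p)"
  have L: "0 < L" unfolding L_def using p by (simp add: ln_div)
  define c where "c = \<alpha> / L"
  have c: "0 < c" unfolding c_def using L a by simp
  define g where "g x = (c*ln x + 2) * exp((c*ln x + 1)*ln(x+1)) * exp(-(p^2 * x powr (-\<alpha>) * (x - c*ln x)))" for x :: real
  have "(g \<longlongrightarrow> 0) at_top" unfolding g_def using p a c by real_asymp
  hence glim: "(\<lambda>n. g (real n)) \<longlonglongrightarrow> 0"
    by (rule filterlim_compose[OF _ filterlim_real_sequentially])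
  have ev1: "eventually (\<lambda>x::real. c * ln x \<le> x / 2) at_top" by real_asymp
  have ev: "eventually (\<lambda>x::real. c * ln x \<le> x / 2 \<and> 1 \<le> x) at_top"
    using ev1 eventually_ge_at_top[of "1::real"] by (rule eventually_conj)
  have evn: "eventually (\<lambda>n. c * ln (real n) \<le> real n / 2 \<and> 1 \<le> real n) sequentially"
    by (rule eventually_compose_filterlim[OF ev filterlim_real_sequentially])
  have bound: "0 \<le> ?T n \<and> ?T n \<le> g (real n)" if hn: "c * ln (real n) \<le> real n / 2" "1 \<le> real n" for n
  proof -
    define x where "x = real n"
    define k where "k = nat \<lfloor>\<alpha> * log (1/p) (real n)\<rfloor>"
    have x1: "1 \<le> x" and xc: "c * ln x \<le> x / 2" using hn unfolding x_def by auto
    have lnx: "0 \<le> ln x" using x1 by simp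
    have "\<alpha> * log (1/p) (real n) = c * ln x" unfolding x_def c_def L_def log_def by simp
    hence kk: "k = nat \<lfloor>c * ln x\<rfloor>" unfolding k_def by simp
    have cl0: "0 \<le> c * ln x" using c lnx by simp
    have kle: "real k \<le> c * ln x" unfolding kk using cl0 by linarith
    have kn: "k \<le> n" using kle xc x1 unfolding x_def by linarith
    have m: "real (n - k) \<ge> x - c * ln x" using kle kn unfolding x_def by (simp add: of_nat_diff)
    have m0: "0 \<le> x - c * ln x" using xc x1 by linarith
    have A1: "real (k + 2) \<le> c * ln x + 2" using kle by simp
    have "real (n+1)^(k+1) = exp (real (k+1) * ln (x+1))"
      unfolding x_def using exp_of_nat_mult[of "k+1" "ln (real n + 1)"] by (simp add: add.commute)
    also have "\<dots> \<le> exp ((c * ln x + 1) * ln (x+1))"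
      using kle x1 by (intro exp_mono mult_right_mono) auto
    finally have A2: "real (n+1)^(k+1) \<le> exp ((c * ln x + 1) * ln (x+1))" .
    define y where "y = p^(k+2)"
    have y01: "0 \<le> y" "y \<le> 1" unfolding y_def using p by (simp, intro power_le_one, auto)
    have "p^k = exp (real k * ln p)" using p exp_of_nat_mult[of k "ln p"] by simp
    also have "real k * ln p \<ge> (c * ln x) * ln p"
      using kle p by (intro mult_right_mono_neg) auto
    hence "exp (real k * ln p) \<ge> exp ((c * ln x) * ln p)" by simp
    also have "(c * ln x) * ln p = - \<alpha> * ln x" unfolding c_def L_def using L p
      by (simp add: ln_div L_def field_simps)
    finally have pk: "p^k \<ge> x powr (-\<alpha>)" using x1 by (simp add: powr_def)
    have "p^2 * x powr (-\<alpha>) \<le> p^2 * p^k" using pk p by (intro mult_left_mono) auto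
    also have "\<dots> = y" unfolding y_def by (simp add: power_add mult.commute power2_eq_square)
    finally have ylow: "y \<ge> p^2 * x powr (-\<alpha>)" .
    have "(1 - y)^(n-k) \<le> exp (-y)^(n-k)"
      using y01 exp_ge_add_one_self[of "-y"] by (intro power_mono) auto
    also have "\<dots> = exp (- (y * real (n-k)))" using exp_of_nat_mult[of "n-k" "-y"] by (simp add: mult.commute)
    also have "\<dots> \<le> exp (-(p^2 * x powr (-\<alpha>) * (x - c*ln x)))"
    proof (rule exp_mono)
      have "p^2 * x powr (-\<alpha>) * (x - c*ln x) \<le> y * real (n-k)"
        using ylow m m0 y01 by (intro mult_mono) auto
      then show "- (y * real (n-k)) \<le> -(p^2 * x powr (-\<alpha>) * (x - c*ln x))" by simp
    qed
    finally have A3: "(1 - y)^(n-k) \<le> exp (-(p^2 * x powr (-\<alpha>) * (x - c*ln x)))" .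
    have T_eq: "?T n = real (k + 2) * real (n+1)^(k+1) * (1 - y)^(n-k)"
      unfolding k_def y_def by simp
    have nn: "0 \<le> (1 - y)^(n-k)" using y01 by simp
    have "?T n \<le> (c*ln x + 2) * exp((c*ln x + 1)*ln(x+1)) * exp(-(p^2 * x powr (-\<alpha>) * (x - c*ln x)))"
      unfolding T_eq using A1 A2 A3 nn cl0 by (intro mult_mono) auto
    moreover have "0 \<le> ?T n" unfolding T_eq using nn by simp
    ultimately show ?thesis unfolding g_def x_def by simp
  qed
  show ?thesis
  proof (rule tendsto_sandwich[OF _ _ tendsto_const glim])
    show "eventually (\<lambda>n. 0 \<le> ?T n) sequentially" using evn by eventually_elim (use bound in blast)
    show "eventually (\<lambda>n. ?T n \<le> g (real n)) sequentially" using evn by eventually_elim (use bound in blast)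
  qed
qed

theorem corollary6p4:
  fixes p P \<alpha> :: real and ps :: "nat \<Rightarrow> nat set \<Rightarrow> real"
  assumes "0 < p" "p \<le> P" "P < 1"
    and "\<And>n \<sigma>. \<sigma> \<in> cand_faces n \<Longrightarrow> p \<le> ps n \<sigma> \<and> ps n \<sigma> \<le> P"
    and "0 < \<alpha>" "\<alpha> < 1"
  shows "(\<lambda>n. measure_pmf.prob (lower_hypergraph n (ps n))
            {X. let Y = largest_complex X;
                    k = nat \<lfloor>\<alpha> * log (1 / p) (real n)\<rfloor>
                in \<forall>S. S \<noteq> {} \<and> S \<subseteq> vertices Y \<and> card S \<le> k + 1
                        \<longrightarrow> S \<in> star_nerve Y})
         \<longlonglongrightarrow> 1"
proof -
  define k where "k n = nat \<lfloor>\<alpha> * log (1/p) (real n)\<rfloor>" for n :: nat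
  define T where "T n = real (k n + 2) * real (n+1)^(k n + 1) * (1 - p^(k n + 2))^(n - k n)" for n :: nat
  define Pr where "Pr n = measure_pmf.prob (lower_hypergraph n (ps n))
            {X. let Y = largest_complex X;
                    k = nat \<lfloor>\<alpha> * log (1 / p) (real n)\<rfloor>
                in \<forall>S. S \<noteq> {} \<and> S \<subseteq> vertices Y \<and> card S \<le> k + 1
                        \<longrightarrow> S \<in> star_nerve Y}" for n
  have p1: "p < 1" using assms(2,3) by linarith
  have Tlim: "T \<longlonglongrightarrow> 0" unfolding T_def k_def
    using T_tendsto[OF assms(1) p1 assms(5,6)] by simp
  have lim1: "(\<lambda>n. 1 - T n) \<longlonglongrightarrow> 1"
    using tendsto_diff[OF tendsto_const Tlim, of 1] by simp
  have low: "1 - T n \<le> Pr n" if "2 \<le> n" for n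
  proof -
    have "1 - T n \<le> measure_pmf.prob (lower_hypergraph n (ps n))
      {X. \<forall>S. S \<noteq> {} \<and> S \<subseteq> vertices (largest_complex X) \<and> card S \<le> k n + 1
              \<longrightarrow> S \<in> star_nerve (largest_complex X)}"
      unfolding T_def
    proof (rule prob_bound[OF that assms(1)])
      show "p \<le> 1" using p1 by simp
      fix \<sigma> assume "\<sigma> \<in> cand_faces n"
      then show "p \<le> ps n \<sigma> \<and> ps n \<sigma> \<le> 1" using assms(4)[of \<sigma> n] assms(3) by auto
    qed
    then show ?thesis unfolding Pr_def k_def Let_def by simp
  qed
  have "Pr \<longlonglongrightarrow> 1"
  proof (rule tendsto_sandwich[OF _ _ lim1 tendsto_const])
    show "eventually (\<lambda>n. 1 - T n \<le> Pr n) sequentially"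
      using eventually_ge_at_top[of "2::nat"] by eventually_elim (rule low)
    show "eventually (\<lambda>n. Pr n \<le> 1) sequentially"
      unfolding Pr_def by simp
  qed
  then show ?thesis unfolding Pr_def .
qed

end
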